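(* Let $T$ be a continuous linear operator on a real or complex separable infinite-dimensional F-space $X$, and let $x$ be a recurrent vector of $T$. Then $x\in\mathrm{span}(\mathcal{E}(T))$ if and only if $\mathrm{span}\{T^nx:n\geq0\}$ is finite-dimensional. Consequently, for every Furstenberg family $\mathcal{F}$ with $\mathcal{F}\mathrm{Rec}(T)\setminus\mathrm{span}(\mathcal{E}(T))\neq\varnothing$, there exists an infinite-dimensional $T$-invariant vector subspace $Z\subset X$ with $Z^N\subset\mathcal{F}\mathrm{Rec}(T_{(N)})$ for every $N\in\mathbb{N}$.
   Context: $x$ is recurrent if $x\in\overline{\{T^nx:n\geq1\}}$. If $X$ is complex, $\mathcal{E}(T)=\{x\neq0: Tx=\lambda x \text{ for some } \lambda\in\mathbb{C},|\lambda|=1\}$ (unimodular eigenvectors). If $X$ is real, let $\widetilde X=\{x+iy:x,y\in X\}\cong X\oplus X$ with complex scalar multiplication $(\alpha+i\beta)(x+iy)=(\alpha x-\beta y)+i(\alpha y+\beta x)$ and $\widetilde T(x+iy)=Tx+iTy$; then $\mathcal{E}(T)=\{x\in X:\exists y\in X,\ x+iy\in\mathcal{E}(\widetilde T)\}$. A Furstenberg family is a collection $\mathcal{F}$ of infinite subsets of $\mathbb{N}_0$, closed under supersets, with $A\cap[n,\infty)\in\mathcal{F}$ whenever $A\in\mathcal{F}$, $n\in\mathbb{N}$. $\mathcal{F}\mathrm{Rec}(S)$ is the set of $y$ such that $\{n\geq0:S^ny\in U\}\in\mathcal{F}$ for every neighbourhood $U$ of $y$. $T_{(N)}=T\oplus\cdots\oplus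 T$ on $X^N$. *)

theory Defs
  imports "HOL-Analysis.Analysis"
begin

definition F_space :: "('k::real_normed_field \<Rightarrow> 'a::{ab_group_add,metric_space} \<Rightarrow> 'a) \<Rightarrow> bool" where
  "F_space sc \<longleftrightarrow>
     vector_space sc \<and>
     (\<forall>x y z::'a. dist (x + z) (y + z) = dist x y) \<and>
     complete (UNIV :: 'a set) \<and>
     continuous_on UNIV (\<lambda>p::'a \<times> 'a. fst p + snd p) \<and>
     continuous_on UNIV (\<lambda>p::'k \<times> 'a. sc (fst p) (snd p))"

definition separable_space :: "'a::topological_space itself \<Rightarrow> bool" where
  "separable_space _ \<longleftrightarrow> (\<exists>D::'a set. countable D \<and> closure D = UNIV)"

definition fin_dim_span :: "('k::field \<Rightarrow> 'a::ab_group_add \<Rightarrow> 'a) \<Rightarrow> 'a set \<Rightarrow> bool" where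
  "fin_dim_span sc S \<longleftrightarrow> (\<exists>B. finite B \<and> module.span sc B = module.span sc S)"

definition infinite_dimensional :: "('k::field \<Rightarrow> 'a::ab_group_add \<Rightarrow> 'a) \<Rightarrow> 'a set \<Rightarrow> bool" where
  "infinite_dimensional sc Z \<longleftrightarrow> \<not> (\<exists>B. finite B \<and> module.span sc B = Z)"

definition recurrent :: "('a::topological_space \<Rightarrow> 'a) \<Rightarrow> 'a \<Rightarrow> bool" where
  "recurrent T x \<longleftrightarrow> x \<in> closure {(T ^^ n) x | n. n \<ge> 1}"

definition unimod_eigvecs_C :: "(complex \<Rightarrow> 'a::ab_group_add \<Rightarrow> 'a) \<Rightarrow> ('a \<Rightarrow> 'a) \<Rightarrow> 'a set" where
  "unimod_eigvecs_C sc T = {x. x \<noteq> 0 \<and> (\<exists>c. cmod c = 1 \<and> T x = sc c x)}"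

text \<open>Complexification X + iX of a real space X, represented as X \<times> X with
  (\<alpha> + i\<beta>)(x + iy) = (\<alpha>x - \<beta>y) + i(\<alpha>y + \<beta>x), and \<open>T~(x+iy) = Tx + iTy\<close>.\<close>
definition cplx_scaleale :: "complex \<Rightarrow> ('a::real_vector \<times> 'a) \<Rightarrow> 'a \<times> 'a" where
  "cplx_scaleale c p = (Re c *\<^sub>R fst p - Im c *\<^sub>R snd p, Re c *\<^sub>R snd p + Im c *\<^sub>R fst p)"

definition cplx_op :: "('a \<Rightarrow> 'a) \<Rightarrow> ('a \<times> 'a) \<Rightarrow> 'a \<times> 'a" where
  "cplx_op T p = (T (fst p), T (snd p))"

definition unimod_eigvecs_R :: "('a::real_vector \<Rightarrow> 'a) \<Rightarrow> 'a set" where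
  "unimod_eigvecs_R T = {x. \<exists>y. (x, y) \<in> unimod_eigvecs_C cplx_scaleale (cplx_op T)}"

definition furstenberg_family :: "nat set set \<Rightarrow> bool" where
  "furstenberg_family \<F> \<longleftrightarrow>
     (\<forall>A\<in>\<F>. infinite A) \<and>
     (\<forall>A B. A \<in> \<F> \<and> A \<subseteq> B \<longrightarrow> B \<in> \<F>) \<and>
     (\<forall>A\<in>\<F>. \<forall>n\<ge>1. A \<inter> {n..} \<in> \<F>)"

definition FRec :: "nat set set \<Rightarrow> 'a topology \<Rightarrow> ('a \<Rightarrow> 'a) \<Rightarrow> 'a set" where
  "FRec \<F> X S = {y \<in> topspace X. \<forall>U. (\<exists>V. openin X V \<and> y \<in> V \<and> V \<subseteq> U) \<longrightarrow>
                    {n. (S ^^ n) y \<in> U} \<in> \<F>}"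

text \<open>X^N as functions on {..<N} (extensional) with the product topology, and T_(N).\<close>
definition power_top :: "nat \<Rightarrow> ('a::topological_space) itself \<Rightarrow> (nat \<Rightarrow> 'a) topology" where
  "power_top N _ = product_topology (\<lambda>_. euclidean) {..<N}"

definition op_power :: "nat \<Rightarrow> ('a \<Rightarrow> 'a) \<Rightarrow> (nat \<Rightarrow> 'a) \<Rightarrow> (nat \<Rightarrow> 'a)" where
  "op_power N T z = restrict (\<lambda>i. T (z i)) {..<N}"

end

theory Submission
  imports Defs "HOL-Computational_Algebra.Polynomial" "HOL-Computational_Algebra.Fundamental_Theorem_Algebra"
begin

locale tvs = vector_space sc for sc :: "'k::real_normed_field \<Rightarrow> 'b::{ab_group_add,metric_space} \<Rightarrow> 'b" +
  fixes T :: "'b \<Rightarrow> 'b"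
  assumes linT: "Vector_Spaces.linear sc sc T"
  and contT: "continuous_on UNIV T"
  and contsc: "continuous_on UNIV (\<lambda>p::'k\<times>'b. sc (fst p) (snd p))"
  and contadd: "continuous_on UNIV (\<lambda>p::'b\<times>'b. fst p + snd p)"
begin

lemma T_add: "T (a + b) = T a + T b" and T_sc: "T (sc c a) = sc c (T a)"
  using linT unfolding Vector_Spaces.linear_iff by auto

lemma T_0: "T 0 = 0" by (metis add_cancel_right_right T_add)

lemma T_diff: "T (a - b) = T a - T b" by (metis T_add diff_add_cancel eq_diff_eq)

lemma Tpow_add: "(T^^n) (a + b) = (T^^n) a + (T^^n) b"
  by (induction n) (auto simp: T_add)
lemma Tpow_sc: "(T^^n) (sc c a) = sc c ((T^^n) a)"
  by (induction n) (auto simp: T_sc)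
lemma Tpow_0: "(T^^n) 0 = 0"
  by (induction n) (auto simp: T_0)

lemma tendsto_sc:
  fixes f :: "'c \<Rightarrow> 'k" and g :: "'c \<Rightarrow> 'b"
  assumes "(f \<longlongrightarrow> a) F" "(g \<longlongrightarrow> v) F"
  shows "((\<lambda>k. sc (f k) (g k)) \<longlongrightarrow> sc a v) F"
proof -
  have "((\<lambda>k. (f k, g k)) \<longlongrightarrow> (a, v)) F" using assms by (rule tendsto_Pair)
  moreover have "isCont (\<lambda>p::'k\<times>'b. sc (fst p) (snd p)) (a, v)"
    using contsc by (simp add: continuous_on_eq_continuous_at)
  ultimately show ?thesis using isCont_tendsto_compose[of "(a,v)" "\<lambda>p::'k\<times>'b. sc (fst p) (snd p)"] by fastforce
qed

lemma tendsto_add':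
  fixes f g :: "'c \<Rightarrow> 'b"
  assumes "(f \<longlongrightarrow> a) F" "(g \<longlongrightarrow> v) F"
  shows "((\<lambda>k. f k + g k) \<longlongrightarrow> a + v) F"
proof -
  have "((\<lambda>k. (f k, g k)) \<longlongrightarrow> (a, v)) F" using assms by (rule tendsto_Pair)
  moreover have "isCont (\<lambda>p::'b\<times>'b. fst p + snd p) (a, v)"
    using contadd by (simp add: continuous_on_eq_continuous_at)
  ultimately show ?thesis using isCont_tendsto_compose[of "(a,v)" "\<lambda>p::'b\<times>'b. fst p + snd p"] by fastforce
qed

lemma tendsto_neg':
  fixes f :: "'c \<Rightarrow> 'b"
  assumes "(f \<longlongrightarrow> a) F"
  shows "((\<lambda>k. - f k) \<longlongrightarrow> - a) F"
  using tendsto_sc[OF tendsto_const[of "-1"] assms] by simp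

lemma tendsto_diff':
  fixes f g :: "'c \<Rightarrow> 'b"
  assumes "(f \<longlongrightarrow> a) F" "(g \<longlongrightarrow> v) F"
  shows "((\<lambda>k. f k - g k) \<longlongrightarrow> a - v) F"
  using tendsto_add'[OF assms(1) tendsto_neg'[OF assms(2)]] by simp

lemma tendsto_T:
  fixes f :: "'c \<Rightarrow> 'b"
  assumes "(f \<longlongrightarrow> a) F"
  shows "((\<lambda>k. T (f k)) \<longlongrightarrow> T a) F"
  using contT assms by (metis continuous_on_eq_continuous_at isCont_tendsto_compose open_UNIV UNIV_I)

lemma tendsto_Tpow:
  fixes f :: "'c \<Rightarrow> 'b"
  assumes "(f \<longlongrightarrow> a) F"
  shows "((\<lambda>k. (T^^n) (f k)) \<longlongrightarrow> (T^^n) a) F"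
  by (induction n) (auto simp: assms intro: tendsto_T)


definition peval :: "'k poly \<Rightarrow> 'b \<Rightarrow> 'b" where
  "peval p = fold_coeffs (\<lambda>a f w. sc a w + T (f w)) p (\<lambda>w. 0)"

lemma peval_0 [simp]: "peval 0 v = 0"
  by (simp add: peval_def)

lemma peval_pCons: "peval (pCons a p) v = sc a v + T (peval p v)"
proof (cases "a = 0 \<and> p = 0")
  case True then show ?thesis by (simp add: peval_def T_0)
next
  case False
  then have "a \<noteq> 0 \<or> p \<noteq> 0" by auto
  then show ?thesis
  proof
    assume "a \<noteq> 0" then show ?thesis by (simp add: peval_def)
  next
    assume "p \<noteq> 0" then show ?thesis by (simp add: peval_def)
  qed
qed

lemma peval_add_v: "peval p (v + w) = peval p v + peval p w"
  by (induction p) (simp_all add: peval_pCons scale_right_distrib T_add algebra_simps)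

lemma peval_sc_v: "peval p (sc c v) = sc c (peval p v)"
  by (induction p) (simp_all add: peval_pCons scale_right_distrib T_sc scale_left_commute[of c])

lemma peval_T: "peval p (T v) = T (peval p v)"
  by (induction p) (simp_all add: peval_pCons T_sc T_add T_0)

lemma peval_add: "peval (p + q) v = peval p v + peval q v"
  by (induction p q rule: poly_induct2) (simp_all add: peval_pCons scale_left_distrib T_add algebra_simps)

lemma peval_smult: "peval (smult c p) v = sc c (peval p v)"
  by (induction p) (simp_all add: peval_pCons T_sc scale_right_distrib)

lemma peval_minus: "peval (- p) v = - peval p v"
  using peval_smult[of "-1" p v] by simp

lemma peval_diff: "peval (p - q) v = peval p v - peval q v"
  using peval_add[of p "-q" v] peval_minus[of q v] by simp

lemma peval_mult: "peval (p * q) v = peval p (peval q v)"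
  by (induction p) (simp_all add: peval_pCons peval_add peval_smult T_0)

lemma peval_const: "peval [:c:] v = sc c v"
  by (simp add: peval_pCons T_0)

lemma peval_lin: "peval [:-l, 1:] v = T v - sc l v"
  by (simp add: peval_pCons T_0)

lemma peval_eig: "T u = sc l u \<Longrightarrow> peval p u = sc (poly p l) u"
  by (induction p) (simp_all add: peval_pCons T_sc scale_left_distrib mult.commute)

lemma peval_monom: "peval (monom 1 n) v = (T^^n) v"
  by (induction n) (simp_all add: monom_0 monom_Suc peval_pCons peval_const T_0)

lemma Tpow_peval: "(T^^n) (peval p v) = peval p ((T^^n) v)"
  by (induction n) (simp_all add: peval_T)

lemma tendsto_peval:
  fixes f :: "'c \<Rightarrow> 'b"
  assumes "(f \<longlongrightarrow> a) F"
  shows "((\<lambda>k. peval p (f k)) \<longlongrightarrow> peval p a) F"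
  by (induction p) (simp_all add: peval_pCons assms tendsto_add' tendsto_sc tendsto_T)

lemma span_orbit_peval:
  assumes "x \<in> span ((\<lambda>i. (T^^i) v) ` {..<n})"
  shows "\<exists>p. (\<forall>i\<ge>n. coeff p i = 0) \<and> x = peval p v"
  using assms
proof (induction rule: span_induct)
  case base
  show ?case
  proof (rule subspaceI)
    show "0 \<in> Collect (\<lambda>x. \<exists>p. (\<forall>i\<ge>n. coeff p i = 0) \<and> x = peval p v)"
      by (intro CollectI exI[of _ 0]) simp
  next
    fix x y assume "x \<in> Collect (\<lambda>x. \<exists>p. (\<forall>i\<ge>n. coeff p i = 0) \<and> x = peval p v)"
      "y \<in> Collect (\<lambda>x. \<exists>p. (\<forall>i\<ge>n. coeff p i = 0) \<and> x = peval p v)"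
    then obtain p q where "\<forall>i\<ge>n. coeff p i = 0" "x = peval p v" "\<forall>i\<ge>n. coeff q i = 0" "y = peval q v"
      by auto
    then show "x + y \<in> Collect (\<lambda>x. \<exists>p. (\<forall>i\<ge>n. coeff p i = 0) \<and> x = peval p v)"
      by (intro CollectI exI[of _ "p + q"]) (simp add: peval_add)
  next
    fix c x assume "x \<in> Collect (\<lambda>x. \<exists>p. (\<forall>i\<ge>n. coeff p i = 0) \<and> x = peval p v)"
    then obtain p where "\<forall>i\<ge>n. coeff p i = 0" "x = peval p v"
      by auto
    then show "sc c x \<in> Collect (\<lambda>x. \<exists>p. (\<forall>i\<ge>n. coeff p i = 0) \<and> x = peval p v)"
      by (intro CollectI exI[of _ "smult c p"]) (simp add: peval_smult)
  qed
next
  case (step x)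
  then obtain i where "i < n" "x = (T^^i) v" by auto
  then show ?case
    by (intro exI[of _ "monom 1 i"]) (simp add: peval_monom)
qed

lemma ann_exists:
  assumes B: "finite B" and orb: "range (\<lambda>n. (T^^n) v) \<subseteq> span B"
  shows "\<exists>p. p \<noteq> 0 \<and> peval p v = 0"
proof -
  define S where "S n = (\<lambda>i. (T^^i) v) ` {..<n}" for n
  have "\<exists>n. (T^^n) v \<in> span (S n)"
  proof (rule ccontr)
    assume H: "\<not> (\<exists>n. (T^^n) v \<in> span (S n))"
    have ind: "independent (S n) \<and> card (S n) = n" for n
    proof (induction n)
      case 0 then show ?case by (simp add: S_def independent_empty)
    next
      case (Suc n)
      have eq: "S (Suc n) = insert ((T^^n) v) (S n)" by (simp add: S_def lessThan_Suc)
      have nin: "(T^^n) v \<notin> span (S n)" using H by blast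
      then have "(T^^n) v \<notin> S n" using span_superset by blast
      moreover have "finite (S n)" by (simp add: S_def)
      ultimately show ?case using Suc nin eq by (simp add: independent_insertI)
    qed
    have "S (Suc (card B)) \<subseteq> span B" using orb by (auto simp: S_def)
    then have "card (S (Suc (card B))) \<le> card B"
      using independent_span_bound[OF B] ind by blast
    with ind show False by simp
  qed
  then obtain n where "(T^^n) v \<in> span (S n)" by blast
  then obtain p where p: "\<forall>i\<ge>n. coeff p i = 0" "(T^^n) v = peval p v"
    using span_orbit_peval unfolding S_def by blast
  have "monom 1 n - p \<noteq> 0"
  proof
    assume "monom 1 n - p = 0"
    then have "coeff (monom 1 n - p) n = 0" by simp
    with p show False by simp
  qed
  moreover have "peval (monom 1 n - p) v = 0"
    using p by (simp add: peval_diff peval_monom)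
  ultimately show ?thesis by blast
qed

end

locale ctvs = tvs sc T for sc :: "complex \<Rightarrow> 'b::{ab_group_add,metric_space} \<Rightarrow> 'b" and T
begin

lemma one_dim_zero:
  assumes lim: "((\<lambda>k. sc (a k) v) \<longlongrightarrow> 0) sequentially" and v: "v \<noteq> 0"
  shows "(a \<longlongrightarrow> 0) sequentially"
proof (rule ccontr)
  assume "\<not> (a \<longlongrightarrow> 0) sequentially"
  then obtain e where e: "e > 0" "\<not> eventually (\<lambda>k. norm (a k) < e) sequentially"
    by (auto simp: tendsto_iff dist_norm)
  then have "frequently (\<lambda>k. norm (a k) \<ge> e) sequentially"
    by (simp add: not_eventually not_less)
  then have inf: "infinite {k. norm (a k) \<ge> e}"
    by (simp add: frequently_cofinite cofinite_eq_sequentially[symmetric])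
  obtain r :: "nat \<Rightarrow> nat" where r: "strict_mono r" "\<And>k. norm (a (r k)) \<ge> e"
    using infinite_enumerate[OF inf] by auto
  define b where "b k = inverse (a (r k))" for k
  have bdd: "bounded (range b)"
    unfolding bounded_iff
  proof (intro exI ballI)
    fix y assume "y \<in> range b"
    then obtain k where "y = b k" by blast
    then show "norm y \<le> inverse e"
      using r(2)[of k] e(1) by (simp add: b_def norm_inverse le_imp_inverse_le)
  qed
  obtain l and q :: "nat \<Rightarrow> nat" where q: "strict_mono q" "(b \<circ> q) \<longlonglongrightarrow> l"
    using bounded_imp_convergent_subsequence[OF bdd] by blast
  have "((\<lambda>k. sc (a (r (q k))) v) \<longlongrightarrow> 0) sequentially"
    using LIMSEQ_subseq_LIMSEQ[OF lim strict_mono_o[OF r(1) q(1)]] by (simp add: o_def)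
  from tendsto_sc[OF q(2) this] have "((\<lambda>k. sc (b (q k)) (sc (a (r (q k))) v)) \<longlongrightarrow> 0) sequentially"
    by (simp add: o_def)
  moreover have "sc (b (q k)) (sc (a (r (q k))) v) = v" for k
  proof -
    have "a (r (q k)) \<noteq> 0" using r(2)[of "q k"] e(1) by auto
    then show ?thesis by (simp add: b_def)
  qed
  ultimately have "((\<lambda>k. v) \<longlongrightarrow> 0) sequentially" by simp
  then have "v = 0" using LIMSEQ_const_iff by blast
  with v show False by simp
qed

end


context ctvs
begin

lemma recurrent_seq:
  assumes "recurrent T v"
  shows "\<exists>n. (\<forall>k. n k \<ge> 1) \<and> ((\<lambda>k. (T^^(n k)) v) \<longlonglongrightarrow> v)"
proof -
  from assms obtain f where f: "\<forall>k. f k \<in> {(T ^^ n) v | n. n \<ge> 1}" "f \<longlonglongrightarrow> v"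
    unfolding recurrent_def closure_sequential by blast
  then have "\<forall>k. \<exists>m. m \<ge> 1 \<and> f k = (T^^m) v" by blast
  from choice[OF this] obtain n where n: "\<forall>k. n k \<ge> 1 \<and> f k = (T^^(n k)) v" by blast
  have fe: "f = (\<lambda>k. (T^^(n k)) v)" using n by auto
  have "\<forall>k. n k \<ge> 1" using n by blast
  moreover have "(\<lambda>k. (T^^(n k)) v) \<longlonglongrightarrow> v" using f(2) unfolding fe .
  ultimately show ?thesis by blast
qed

lemma Tpow_eig: "T u = sc l u \<Longrightarrow> (T^^j) u = sc (l^j) u"
  by (induction j) (simp_all add: T_sc mult.commute)

lemma root_lemma:
  assumes n1: "\<forall>k. n k \<ge> 1" and lim: "(\<lambda>k. (T^^(n k)) v) \<longlonglongrightarrow> v"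
    and mv: "peval m v = 0" and m0: "m \<noteq> 0"
    and mmin: "\<forall>p. p \<noteq> 0 \<and> peval p v = 0 \<longrightarrow> degree m \<le> degree p"
    and root: "poly m l = 0"
  shows "cmod l = 1 \<and> ((\<lambda>k. l^(n k)) \<longlonglongrightarrow> 1)"
proof -
  from root obtain q where mq: "m = [:-l,1:] * q"
    unfolding poly_eq_0_iff_dvd by (elim dvdE)
  with m0 have q0: "q \<noteq> 0" by auto
  have lin0: "[:-l,1:] \<noteq> (0::complex poly)" by simp
  have "degree ([:-l,1:] * q) = degree [:-l,1:] + degree q"
    using degree_mult_eq[OF lin0 q0] .
  then have dm: "degree m = Suc (degree q)" unfolding mq by simp
  define u where "u = peval q v"
  have u0: "u \<noteq> 0"
  proof
    assume "u = 0"
    then have "peval q v = 0" by (simp add: u_def)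
    then have "degree m \<le> degree q" using mmin q0 by blast
    with dm show False by simp
  qed
  have "peval m v = peval [:-l,1:] u" unfolding mq u_def by (rule peval_mult)
  then have "T u - sc l u = 0" using mv by (simp only: peval_lin)
  then have Tu: "T u = sc l u" by simp
  have "(\<lambda>k. peval q ((T^^(n k)) v)) \<longlonglongrightarrow> u"
    unfolding u_def by (rule tendsto_peval[OF lim])
  then have "(\<lambda>k. sc (l^(n k)) u) \<longlonglongrightarrow> u"
    by (simp add: Tpow_peval[symmetric] u_def[symmetric] Tpow_eig[OF Tu])
  from tendsto_diff'[OF this tendsto_const[of u]]
  have "(\<lambda>k. sc (l^(n k) - 1) u) \<longlonglongrightarrow> 0"
    by (simp add: scale_left_diff_distrib)
  from one_dim_zero[OF this u0] have L: "(\<lambda>k. l^(n k)) \<longlonglongrightarrow> 1"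
    by (rule LIM_zero_cancel)
  then have LN: "(\<lambda>k. cmod l ^ (n k)) \<longlonglongrightarrow> 1"
    using tendsto_norm[OF L] by (simp add: norm_power)
  have "cmod l = 1"
  proof (rule ccontr)
    assume "cmod l \<noteq> 1"
    then consider "cmod l < 1" | "cmod l > 1" by linarith
    then show False
    proof cases
      case 1
      have "cmod l ^ (n k) \<le> cmod l" for k
        using power_decreasing[of 1 "n k" "cmod l"] n1 1 by simp
      then have "1 \<le> cmod l"
        using tendsto_upperbound[OF LN] by (simp add: eventually_sequentially) 
      with 1 show False by simp
    next
      case 2
      have "cmod l ^ (n k) \<ge> cmod l" for k
        using power_increasing[of 1 "n k" "cmod l"] n1 2 by simp
      then have "1 \<ge> cmod l"
        using tendsto_lowerbound[OF LN] by (simp add: eventually_sequentially)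
      with 2 show False by simp
    qed
  qed
  with L show ?thesis by simp
qed


lemma Tpow_jordan:
  assumes Tw: "T w = u + sc l w" and Tu: "T u = sc l u"
  shows "(T^^j) w = sc (l^j) w + sc (of_nat j * l^(j - 1)) u"
proof (induction j)
  case 0 then show ?case by simp
next
  case (Suc j)
  have "(T^^Suc j) w = sc (l^j) (T w) + sc (of_nat j * l^(j - 1)) (T u)"
    using Suc by (simp add: T_add T_sc)
  also have "\<dots> = sc (l^Suc j) w + sc (l^j + of_nat j * l^(j - 1) * l) u"
    by (simp add: Tw Tu scale_right_distrib scale_left_distrib mult.commute)
  also have "l^j + of_nat j * l^(j - 1) * l = of_nat (Suc j) * l^(Suc j - 1)"
    by (cases j) (simp_all add: algebra_simps)
  finally show ?case .
qed

lemma no_double_root: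
  assumes n1: "\<forall>k. n k \<ge> 1" and lim: "(\<lambda>k. (T^^(n k)) v) \<longlonglongrightarrow> v"
    and mv: "peval m v = 0" and m0: "m \<noteq> 0"
    and mmin: "\<forall>p. p \<noteq> 0 \<and> peval p v = 0 \<longrightarrow> degree m \<le> degree p"
    and dv: "[:-l,1:]^2 dvd m"
  shows False
proof -
  from dv obtain q where "m = [:-l,1:]^2 * q"
    by (elim dvdE) blast
  then have mq: "m = [:-l,1:] * ([:-l,1:] * q)" by (simp only: power2_eq_square mult.assoc)
  have root: "poly m l = 0" by (simp add: mq)
  from root_lemma[OF n1 lim mv m0 mmin root] have l1: "cmod l = 1" and L: "(\<lambda>k. l^(n k)) \<longlonglongrightarrow> 1"
    by auto
  from mq m0 have q0: "q \<noteq> 0" by auto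
  have lin0: "[:-l,1:] \<noteq> (0::complex poly)" by simp
  have q1: "[:-l,1:] * q \<noteq> 0" by (rule no_zero_divisors[OF lin0 q0])
  have "degree ([:-l,1:] * ([:-l,1:] * q)) = degree [:-l,1:] + degree ([:-l,1:] * q)"
    using degree_mult_eq[OF lin0 q1] .
  then have dm: "degree m = Suc (degree ([:-l,1:] * q))" unfolding mq by simp
  define w where "w = peval q v"
  define u where "u = peval [:-l,1:] w"
  have u0: "u \<noteq> 0"
  proof
    assume "u = 0"
    moreover have "peval ([:-l,1:] * q) v = u" unfolding u_def w_def by (rule peval_mult)
    ultimately have "peval ([:-l,1:] * q) v = 0" by simp
    then have "degree m \<le> degree ([:-l,1:] * q)" using mmin q1 by blast
    with dm show False by simp
  qed
  have "peval m v = peval [:-l,1:] u" unfolding mq u_def w_def by (simp only: peval_mult)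
  then have "T u - sc l u = 0" using mv by (simp only: peval_lin)
  then have Tu: "T u = sc l u" by simp
  have Tw: "T w = u + sc l w" unfolding u_def peval_lin by simp
  have "(\<lambda>k. peval q ((T^^(n k)) v)) \<longlonglongrightarrow> w"
    unfolding w_def by (rule tendsto_peval[OF lim])
  then have A: "(\<lambda>k. (T^^(n k)) w) \<longlonglongrightarrow> w"
    by (simp add: Tpow_peval[symmetric] w_def[symmetric])
  have B: "(\<lambda>k. sc (l^(n k)) w) \<longlonglongrightarrow> sc 1 w"
    by (rule tendsto_sc[OF L tendsto_const])
  from tendsto_diff'[OF A B]
  have "(\<lambda>k. sc (of_nat (n k) * l^(n k - 1)) u) \<longlonglongrightarrow> 0"
    by (simp add: Tpow_jordan[OF Tw Tu])
  from one_dim_zero[OF this u0]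
  have Z: "(\<lambda>k. of_nat (n k) * l^(n k - 1)) \<longlonglongrightarrow> (0::complex)" .
  have bd: "norm (of_nat (n k) * l^(n k - 1)) \<ge> 1" for k
    using n1 l1 by (simp add: norm_mult norm_power)
  from tendstoD[OF Z, of 1] have "eventually (\<lambda>k. norm (of_nat (n k) * l^(n k - 1)) < (1::real)) sequentially"
    by (simp add: dist_norm)
  then obtain N where "\<forall>k\<ge>N. norm (of_nat (n k) * l^(n k - 1)) < (1::real)"
    unfolding eventually_sequentially by blast
  with bd[of N] show False by force
qed

lemma decompose:
  assumes "p \<noteq> 0" "peval p v = 0" "\<forall>l. poly p l = 0 \<longrightarrow> cmod l = 1"
      "\<forall>l. \<not> [:-l,1:]^2 dvd p"
  shows "v \<in> span (unimod_eigvecs_C sc T)"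
  using assms
proof (induction "degree p" arbitrary: p v rule: less_induct)
  case (less p v)
  show ?case
  proof (cases "degree p = 0")
    case True
    then have pc: "p = [:coeff p 0:]" using degree_0_id[OF True] by simp
    with less.prems(1) have c0: "coeff p 0 \<noteq> 0" by (metis pCons_0_0)
    from less.prems(2) have "sc (coeff p 0) v = 0" by (subst (asm) pc) (simp only: peval_const)
    with c0 have "v = 0" by simp
    then show ?thesis by (simp add: span_zero)
  next
    case False
    have "\<not> (\<exists>a l. a \<noteq> 0 \<and> l = 0 \<and> p = pCons a l)"
      using False by auto
    from fundamental_theorem_of_algebra_alt[OF this] obtain l where root: "poly p l = 0" by blast
    then obtain q where pq: "p = [:-l,1:] * q"
      unfolding poly_eq_0_iff_dvd by (elim dvdE)
    with less.prems(1) have q0: "q \<noteq> 0" by auto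
    have lin0: "[:-l,1:] \<noteq> (0::complex poly)" by simp
    have "degree ([:-l,1:] * q) = degree [:-l,1:] + degree q"
      using degree_mult_eq[OF lin0 q0] .
    then have dp: "degree p = Suc (degree q)" unfolding pq by simp
    have ql: "poly q l \<noteq> 0"
    proof
      assume "poly q l = 0"
      then obtain r where qr: "q = [:-l,1:] * r"
        unfolding poly_eq_0_iff_dvd by (elim dvdE)
      have "[:-l,1:]^2 dvd p" unfolding pq qr power2_eq_square mult.assoc[symmetric] by (rule dvd_triv_left)
      with less.prems(4) show False by blast
    qed
    have l1: "cmod l = 1" using less.prems(3) root by blast
    define u where "u = peval q v"
    have "peval p v = peval [:-l,1:] u" unfolding pq u_def by (simp only: peval_mult)
    then have "T u - sc l u = 0" using less.prems(2) by (simp only: peval_lin)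
    then have Tu: "T u = sc l u" by simp
    define c where "c = poly q l"
    define v' where "v' = v - sc (inverse c) u"
    have "v' = v + sc (- inverse c) u" by (simp add: v'_def)
    then have "peval q v' = peval q v + sc (- inverse c) (peval q u)"
      by (simp only: peval_add_v peval_sc_v)
    also have "\<dots> = u + sc (- inverse c) (sc c u)"
      by (simp only: peval_eig[OF Tu] u_def[symmetric] c_def)
    also have "\<dots> = 0" using ql by (simp add: c_def)
    finally have qv': "peval q v' = 0" .
    have "v' \<in> span (unimod_eigvecs_C sc T)"
    proof (rule less.hyps)
      show "degree q < degree p" using dp by simp
      show "q \<noteq> 0" by fact
      show "peval q v' = 0" by fact
      show "\<forall>l. poly q l = 0 \<longrightarrow> cmod l = 1"
        using less.prems(3) unfolding pq by simp
      show "\<forall>l. \<not> [:-l,1:]^2 dvd q"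
      proof (intro allI notI)
        fix l' assume "[:-l',1:]^2 dvd q"
        then have "[:-l',1:]^2 dvd p" unfolding pq by (rule dvd_mult)
        with less.prems(4) show False by blast
      qed
    qed
    moreover have "u \<in> span (unimod_eigvecs_C sc T)"
    proof (cases "u = 0")
      case True then show ?thesis by (simp add: span_zero)
    next
      case False
      then have "u \<in> unimod_eigvecs_C sc T" using Tu l1 by (auto simp: unimod_eigvecs_C_def)
      then show ?thesis by (rule span_base)
    qed
    ultimately have "v' + sc (inverse c) u \<in> span (unimod_eigvecs_C sc T)"
      by (intro span_add span_scale)
    then show ?thesis by (simp add: v'_def)
  qed
qed

lemma recurrent_fin_imp_span:
  assumes rec: "recurrent T v" and B: "finite B" and orb: "range (\<lambda>n. (T^^n) v) \<subseteq> span B"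
  shows "v \<in> span (unimod_eigvecs_C sc T)"
proof -
  obtain n where n1: "\<forall>k. n k \<ge> 1" and lim: "(\<lambda>k. (T^^(n k)) v) \<longlonglongrightarrow> v"
    using recurrent_seq[OF rec] by blast
  obtain p0 where "p0 \<noteq> 0 \<and> peval p0 v = 0" using ann_exists[OF B orb] by blast
  from ex_has_least_nat[of "\<lambda>p. p \<noteq> 0 \<and> peval p v = 0", OF this, of degree]
  obtain m where m: "m \<noteq> 0" "peval m v = 0" and mmin: "\<forall>p. p \<noteq> 0 \<and> peval p v = 0 \<longrightarrow> degree m \<le> degree p"
    by blast
  show ?thesis
  proof (rule decompose[OF m])
    show "\<forall>l. poly m l = 0 \<longrightarrow> cmod l = 1"
      using root_lemma[OF n1 lim m(2) m(1) mmin] by blast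
    show "\<forall>l. \<not> [:-l,1:]^2 dvd m"
      using no_double_root[OF n1 lim m(2) m(1) mmin] by blast
  qed
qed

end

context tvs
begin

lemma T_span_inv:
  assumes "\<forall>b\<in>B. T b \<in> span B"
  shows "y \<in> span B \<Longrightarrow> T y \<in> span B"
proof (induction rule: span_induct)
  case base
  show ?case
  proof (rule subspaceI)
    show "0 \<in> Collect (\<lambda>y. T y \<in> span B)" by (simp add: T_0 span_zero)
  qed (simp_all add: T_add T_sc span_add span_scale)
next
  case (step x) then show ?case using assms by blast
qed

lemma orbit_in_span:
  assumes "\<forall>b\<in>B. T b \<in> span B" "x \<in> span B"
  shows "(T^^n) x \<in> span B"
proof (induction n)
  case 0 then show ?case using assms(2) by simp
next
  case (Suc n)
  have "T ((T^^n) x) \<in> span B" by (rule T_span_inv[OF assms(1) Suc])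
  then show ?case by simp
qed

lemma fin_dim_of_subset:
  assumes "finite B" "S \<subseteq> span B"
  shows "fin_dim_span sc S"
proof -
  obtain C where C: "C \<subseteq> span S" "independent C" "span S \<subseteq> span C" "card C = dim (span S)"
    by (rule basis_exists[of "span S"])
  have SB: "span S \<subseteq> span B" using span_mono[OF assms(2)] by (simp add: span_span)
  have "C \<subseteq> span B" using C(1) SB by (rule subset_trans)
  then have "finite C" using independent_span_bound[OF assms(1) C(2)] by blast
  moreover have "span C \<subseteq> span S" using span_mono[OF C(1)] by (simp add: span_span)
  then have "span C = span S" using C(3) by (rule subset_antisym)
  ultimately show ?thesis unfolding fin_dim_span_def by blast
qed

lemma span_easy:
  assumes x: "x \<in> span S"
    and hS: "\<And>s. s \<in> S \<Longrightarrow> \<exists>B. finite B \<and> s \<in> span B \<and> (\<forall>b\<in>B. T b \<in> span B)"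
  shows "fin_dim_span sc (range (\<lambda>n. (T^^n) x))"
proof -
  have "\<exists>B. finite B \<and> x \<in> span B \<and> (\<forall>b\<in>B. T b \<in> span B)"
    using x
  proof (induction rule: span_induct)
    case base
    show ?case
    proof (rule subspaceI)
      show "0 \<in> Collect (\<lambda>x. \<exists>B. finite B \<and> x \<in> span B \<and> (\<forall>b\<in>B. T b \<in> span B))"
        by (intro CollectI exI[of _ "{}"]) (simp add: span_zero)
    next
      fix x y assume "x \<in> Collect (\<lambda>x. \<exists>B. finite B \<and> x \<in> span B \<and> (\<forall>b\<in>B. T b \<in> span B))"
        "y \<in> Collect (\<lambda>x. \<exists>B. finite B \<and> x \<in> span B \<and> (\<forall>b\<in>B. T b \<in> span B))"
      then obtain B1 B2 where B: "finite B1" "x \<in> span B1" "\<forall>b\<in>B1. T b \<in> span B1"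
        "finite B2" "y \<in> span B2" "\<forall>b\<in>B2. T b \<in> span B2" by blast
      have "span B1 \<subseteq> span (B1 \<union> B2)" "span B2 \<subseteq> span (B1 \<union> B2)" by (simp_all add: span_mono)
      with B show "x + y \<in> Collect (\<lambda>x. \<exists>B. finite B \<and> x \<in> span B \<and> (\<forall>b\<in>B. T b \<in> span B))"
        by (intro CollectI exI[of _ "B1 \<union> B2"]) (auto intro: span_add)
    next
      fix c x assume "x \<in> Collect (\<lambda>x. \<exists>B. finite B \<and> x \<in> span B \<and> (\<forall>b\<in>B. T b \<in> span B))"
      then obtain B where B: "finite B" "x \<in> span B" "\<forall>b\<in>B. T b \<in> span B" by blast
      then show "sc c x \<in> Collect (\<lambda>x. \<exists>B. finite B \<and> x \<in> span B \<and> (\<forall>b\<in>B. T b \<in> span B))"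
        by (intro CollectI exI[of _ B]) (auto intro: span_scale)
    qed
  next
    case (step s) then show ?case using hS by blast
  qed
  then obtain B where B: "finite B" "x \<in> span B" "\<forall>b\<in>B. T b \<in> span B" by blast
  have "range (\<lambda>n. (T^^n) x) \<subseteq> span B" using orbit_in_span[OF B(3) B(2)] by blast
  then show ?thesis using fin_dim_of_subset[OF B(1)] by blast
qed

lemma FRec_recurrent:
  assumes F: "furstenberg_family \<F>" and x: "x \<in> FRec \<F> euclidean T"
  shows "recurrent T x"
  unfolding recurrent_def closure_approachable
proof (intro allI impI)
  fix e :: real assume e: "e > 0"
  have "{n. (T^^n) x \<in> ball x e} \<in> \<F>"
    using x e unfolding FRec_def by (auto intro!: exI[of _ "ball x e"])
  then have "infinite {n. (T^^n) x \<in> ball x e}" using F unfolding furstenberg_family_def by blast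
  then obtain n where "n \<in> {n. (T^^n) x \<in> ball x e}" "n \<ge> 1"
    unfolding infinite_nat_iff_unbounded_le by blast
  then show "\<exists>y\<in>{(T ^^ n) x |n. 1 \<le> n}. dist y x < e"
    by (auto simp: dist_commute)
qed

lemma Tpow_cont: "continuous_on UNIV (T^^n)"
proof (induction n)
  case 0 then show ?case by (simp add: continuous_on_id)
next
  case (Suc n)
  have "continuous_on UNIV (T \<circ> (T^^n))"
    by (rule continuous_on_compose[OF Suc]) (meson contT continuous_on_subset subset_UNIV)
  then show ?case by (simp add: o_def)
qed

lemma cont_tendsto_iff:
  "continuous_on UNIV f \<longleftrightarrow> (\<forall>x. ((\<lambda>y. f y) \<longlongrightarrow> f x) (at x))"
  by (simp add: continuous_on_def)

lemma span_orbit_op: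
  assumes "w \<in> span (range (\<lambda>n. (T^^n) x))"
  shows "\<exists>L. continuous_on UNIV L \<and> (\<forall>y. L (T y) = T (L y)) \<and> L x = w"
  using assms
proof (induction rule: span_induct)
  case base
  let ?P = "\<lambda>w. \<exists>L. continuous_on UNIV L \<and> (\<forall>y. L (T y) = T (L y)) \<and> L x = w"
  show ?case
  proof (rule subspaceI)
    show "0 \<in> Collect ?P"
      by (intro CollectI exI[of _ "\<lambda>_. 0"]) (simp add: T_0 continuous_on_const)
  next
    fix a b assume "a \<in> Collect ?P" "b \<in> Collect ?P"
    then obtain L1 L2 where L: "continuous_on UNIV L1" "\<forall>y. L1 (T y) = T (L1 y)" "L1 x = a"
      "continuous_on UNIV L2" "\<forall>y. L2 (T y) = T (L2 y)" "L2 x = b" by blast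
    have "continuous_on UNIV (\<lambda>y. L1 y + L2 y)"
      using L(1,4) unfolding cont_tendsto_iff by (blast intro: tendsto_add')
    with L show "a + b \<in> Collect ?P"
      by (intro CollectI exI[of _ "\<lambda>y. L1 y + L2 y"]) (simp add: T_add)
  next
    fix c a assume "a \<in> Collect ?P"
    then obtain L where L: "continuous_on UNIV L" "\<forall>y. L (T y) = T (L y)" "L x = a" by blast
    have "continuous_on UNIV (\<lambda>y. sc c (L y))" unfolding cont_tendsto_iff
    proof
      fix y0 show "((\<lambda>y. sc c (L y)) \<longlongrightarrow> sc c (L y0)) (at y0)"
        using L(1) unfolding cont_tendsto_iff by (intro tendsto_sc[OF tendsto_const]) blast
    qed
    with L show "sc c a \<in> Collect ?P"
      by (intro CollectI exI[of _ "\<lambda>y. sc c (L y)"]) (simp add: T_sc)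
  qed
next
  case (step w)
  then obtain n where n: "w = (T^^n) x" by blast
  show ?case
    by (rule exI[of _ "T^^n"]) (simp add: n Tpow_cont funpow_swap1)
qed

lemma part2:
  assumes F: "furstenberg_family \<F>" and x: "x \<in> FRec \<F> euclidean T"
    and nfd: "\<not> fin_dim_span sc (range (\<lambda>n. (T^^n) x))"
  shows "\<exists>Z. subspace Z \<and> T ` Z \<subseteq> Z \<and> infinite_dimensional sc Z \<and>
               (\<forall>N\<ge>1. PiE {..<N} (\<lambda>_. Z) \<subseteq> FRec \<F> (power_top N TYPE('b)) (op_power N T))"
proof (intro exI conjI allI impI)
  define Z where "Z = span (range (\<lambda>n. (T^^n) x))"
  show "subspace Z" unfolding Z_def by simp
  have inv: "\<forall>b\<in>range (\<lambda>n. (T^^n) x). T b \<in> span (range (\<lambda>n. (T^^n) x))"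
  proof
    fix b assume "b \<in> range (\<lambda>n. (T^^n) x)"
    then obtain n where "b = (T^^n) x" by blast
    then have "T b = (T^^Suc n) x" by simp
    then show "T b \<in> span (range (\<lambda>n. (T^^n) x))" by (metis rangeI span_base)
  qed
  show "T ` Z \<subseteq> Z" unfolding Z_def using T_span_inv[OF inv] by blast
  show "infinite_dimensional sc Z"
    using nfd unfolding infinite_dimensional_def fin_dim_span_def Z_def by blast
  fix N :: nat assume N: "N \<ge> 1"
  show "PiE {..<N} (\<lambda>_. Z) \<subseteq> FRec \<F> (power_top N TYPE('b)) (op_power N T)"
  proof
    fix z assume z: "z \<in> PiE {..<N} (\<lambda>_. Z)"
    have "\<forall>i\<in>{..<N}. \<exists>L. continuous_on UNIV L \<and> (\<forall>y. L (T y) = T (L y)) \<and> L x = z i"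
      using z span_orbit_op unfolding Z_def by (auto simp: PiE_iff)
    from bchoice[OF this] obtain L where L0: "\<forall>i\<in>{..<N}. continuous_on UNIV (L i) \<and> (\<forall>y. L i (T y) = T (L i y)) \<and> L i x = z i"
      by blast
    then have L: "\<And>i. i < N \<Longrightarrow> continuous_on UNIV (L i) \<and> (\<forall>y. L i (T y) = T (L i y)) \<and> L i x = z i"
      by simp
    define \<Phi> where "\<Phi> y = restrict (\<lambda>i. L i y) {..<N}" for y
    have Phix: "\<Phi> x = z"
      using z L unfolding \<Phi>_def by (auto simp: PiE_iff restrict_def extensional_def fun_eq_iff)
    have Phicont: "continuous_map euclidean (product_topology (\<lambda>_. euclidean) {..<N}) \<Phi>"
      unfolding continuous_map_componentwise
      using L by (auto simp: \<Phi>_def continuous_map_iff_continuous2)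
    have PhiT: "op_power N T (\<Phi> y) = \<Phi> (T y)" for y
      using L unfolding op_power_def \<Phi>_def by (auto simp: restrict_def fun_eq_iff)
    have Phipow: "(op_power N T ^^ n) z = \<Phi> ((T^^n) x)" for n
      by (induction n) (simp_all add: Phix PhiT)
    show "z \<in> FRec \<F> (power_top N TYPE('b)) (op_power N T)"
      unfolding FRec_def
    proof (intro CollectI conjI allI impI)
      show "z \<in> topspace (power_top N TYPE('b))"
        using z unfolding power_top_def by (auto simp: PiE_iff)
      fix U assume "\<exists>V. openin (power_top N TYPE('b)) V \<and> z \<in> V \<and> V \<subseteq> U"
      then obtain V where V: "openin (product_topology (\<lambda>_. euclidean) {..<N}) V" "z \<in> V" "V \<subseteq> U"
        unfolding power_top_def by blast
      define W where "W = {y \<in> topspace euclidean. \<Phi> y \<in> V}"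
      have W: "openin euclidean W" unfolding W_def by (rule openin_continuous_map_preimage[OF Phicont V(1)])
      have "x \<in> W" unfolding W_def using Phix V(2) by simp
      then have "{n. (T^^n) x \<in> W} \<in> \<F>"
        using x W unfolding FRec_def by blast
      moreover have "{n. (T^^n) x \<in> W} \<subseteq> {n. (op_power N T ^^ n) z \<in> U}"
        using V(3) by (auto simp: W_def Phipow)
      ultimately show "{n. (op_power N T ^^ n) z \<in> U} \<in> \<F>"
        using F unfolding furstenberg_family_def by blast
    qed
  qed
qed

end


lemma span_real_eq: "span = module.span (scaleR :: real \<Rightarrow> 'a::real_vector \<Rightarrow> 'a)"
  by (simp add: span_raw_def)

lemma subspace_real_eq: "subspace = module.subspace (scaleR :: real \<Rightarrow> 'a::real_vector \<Rightarrow> 'a)"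
  by (simp add: subspace_raw_def)

lemma cplx_vs: "vector_space (cplx_scaleale :: complex \<Rightarrow> 'a::real_vector \<times> 'a \<Rightarrow> 'a \<times> 'a)"
proof unfold_locales
  fix a b :: complex and x y :: "'a \<times> 'a"
  show "cplx_scaleale a (x + y) = cplx_scaleale a x + cplx_scaleale a y"
    by (simp add: cplx_scaleale_def algebra_simps)
  show "cplx_scaleale (a + b) x = cplx_scaleale a x + cplx_scaleale b x"
    by (simp add: cplx_scaleale_def algebra_simps)
  show "cplx_scaleale a (cplx_scaleale b x) = cplx_scaleale (a * b) x"
    by (simp add: cplx_scaleale_def algebra_simps)
  show "cplx_scaleale 1 x = x"
    by (simp add: cplx_scaleale_def)
qed

context
  fixes T :: "'a::{real_vector,metric_space} \<Rightarrow> 'a"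
  assumes tv: "tvs scaleR T"
begin

interpretation R: tvs scaleR T by (rule tv)

lemma cplx_lin: "Vector_Spaces.linear cplx_scaleale cplx_scaleale (cplx_op T)"
  unfolding Vector_Spaces.linear_iff
  using cplx_vs by (auto simp: cplx_op_def cplx_scaleale_def R.T_add R.T_sc R.T_diff)

lemma cplx_cont_op: "continuous_on UNIV (cplx_op T)"
  unfolding cplx_op_def
  by (intro continuous_on_Pair continuous_on_compose2[OF R.contT] continuous_on_fst continuous_on_snd continuous_on_id) auto

lemma cplx_cont_sc: "continuous_on UNIV (\<lambda>p::complex \<times> ('a \<times> 'a). cplx_scaleale (fst p) (snd p))"
  unfolding continuous_on_def
proof
  fix p0 :: "complex \<times> ('a \<times> 'a)"
  let ?F = "at p0 within UNIV"
  have h1: "((\<lambda>p. Re (fst p)) \<longlongrightarrow> Re (fst p0)) ?F" "((\<lambda>p. Im (fst p)) \<longlongrightarrow> Im (fst p0)) ?F"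
    by (intro tendsto_intros)+
  have h2: "((\<lambda>p. fst (snd p)) \<longlongrightarrow> fst (snd p0)) ?F" "((\<lambda>p. snd (snd p)) \<longlongrightarrow> snd (snd p0)) ?F"
    by (intro tendsto_intros)+
  show "((\<lambda>p. cplx_scaleale (fst p) (snd p)) \<longlongrightarrow> cplx_scaleale (fst p0) (snd p0)) ?F"
    unfolding cplx_scaleale_def
    by (intro tendsto_Pair R.tendsto_diff' R.tendsto_add' R.tendsto_sc h1 h2)
qed

lemma cplx_cont_add: "continuous_on UNIV (\<lambda>p::('a \<times> 'a) \<times> ('a \<times> 'a). fst p + snd p)"
  unfolding continuous_on_def
proof
  fix p0 :: "('a \<times> 'a) \<times> ('a \<times> 'a)"
  let ?F = "at p0 within UNIV"
  have h: "((\<lambda>p. fst (fst p)) \<longlongrightarrow> fst (fst p0)) ?F" "((\<lambda>p. snd (fst p)) \<longlongrightarrow> snd (fst p0)) ?F"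
    "((\<lambda>p. fst (snd p)) \<longlongrightarrow> fst (snd p0)) ?F" "((\<lambda>p. snd (snd p)) \<longlongrightarrow> snd (snd p0)) ?F"
    by (intro tendsto_intros)+
  have "((\<lambda>p. (fst (fst p) + fst (snd p), snd (fst p) + snd (snd p))) \<longlongrightarrow>
      (fst (fst p0) + fst (snd p0), snd (fst p0) + snd (snd p0))) ?F"
    by (intro tendsto_Pair R.tendsto_add' h)
  then show "((\<lambda>p. fst p + snd p) \<longlongrightarrow> fst p0 + snd p0) ?F"
    by (simp add: plus_prod_def case_prod_beta)
qed

lemma cplx_ctvs: "ctvs cplx_scaleale (cplx_op T)"
  by (intro ctvs.intro tvs.intro tvs_axioms.intro cplx_vs cplx_lin cplx_cont_op cplx_cont_sc cplx_cont_add)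

lemma cplx_pow: "(cplx_op T ^^ n) (x, y) = ((T^^n) x, (T^^n) y)"
  by (induction n) (simp_all add: cplx_op_def)

lemma cplx_recurrent:
  assumes "recurrent T x"
  shows "recurrent (cplx_op T) (x, 0)"
proof -
  from assms obtain f where f: "\<forall>k. f k \<in> {(T ^^ n) x | n. n \<ge> 1}" "f \<longlonglongrightarrow> x"
    unfolding recurrent_def closure_sequential by blast
  have A: "\<forall>k. (f k, 0) \<in> {(cplx_op T ^^ n) (x, 0) | n. n \<ge> 1}"
    using f(1) by (auto simp: cplx_pow R.Tpow_0)
  have B: "(\<lambda>k. (f k, 0)) \<longlonglongrightarrow> (x, 0)"
    by (intro tendsto_Pair f(2) tendsto_const)
  show ?thesis
    unfolding recurrent_def closure_sequential using A B by (intro exI[of _ "\<lambda>k. (f k, 0)"] conjI) auto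
qed

lemma cplx_span_embed:
  assumes "y \<in> span B"
  shows "(y, 0) \<in> module.span cplx_scaleale ((\<lambda>b. (b, 0)) ` B)"
  using assms
proof (induction rule: span_induct)
  case base
  interpret C: vector_space cplx_scaleale by (rule cplx_vs)
  show ?case
  proof (rule subspaceI)
    show "0 \<in> Collect (\<lambda>y. (y, 0) \<in> C.span ((\<lambda>b. (b, 0)) ` B))"
      using C.span_zero by (simp add: zero_prod_def)
  next
    fix a b assume "a \<in> Collect (\<lambda>y. (y, 0) \<in> C.span ((\<lambda>b. (b, 0)) ` B))"
      "b \<in> Collect (\<lambda>y. (y, 0) \<in> C.span ((\<lambda>b. (b, 0)) ` B))"
    then have "(a, 0) + (b, 0) \<in> C.span ((\<lambda>b. (b, 0)) ` B)" by (intro C.span_add) simp_all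
    moreover have "(a, 0) + (b, 0) = (a + b, (0::'a))" by simp
    ultimately show "a + b \<in> Collect (\<lambda>y. (y, 0) \<in> C.span ((\<lambda>b. (b, 0)) ` B))" by simp
  next
    fix c :: real and a assume "a \<in> Collect (\<lambda>y. (y, 0) \<in> C.span ((\<lambda>b. (b, 0)) ` B))"
    then have "cplx_scaleale (complex_of_real c) (a, 0) \<in> C.span ((\<lambda>b. (b, 0)) ` B)"
      by (simp add: C.span_scale)
    then show "c *\<^sub>R a \<in> Collect (\<lambda>y. (y, 0) \<in> C.span ((\<lambda>b. (b, 0)) ` B))"
      by (simp add: cplx_scaleale_def)
  qed
next
  case (step y)
  interpret C: vector_space cplx_scaleale by (rule cplx_vs)
  show ?case using step by (intro C.span_base) blast
qed

lemma cplx_span_proj: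
  assumes "w \<in> module.span cplx_scaleale (unimod_eigvecs_C cplx_scaleale (cplx_op T))"
  shows "fst w \<in> span (unimod_eigvecs_R T) \<and> snd w \<in> span (unimod_eigvecs_R T)"
proof -
  interpret C: ctvs cplx_scaleale "cplx_op T" by (rule cplx_ctvs)
  show ?thesis
    using assms
  proof (induction rule: C.span_induct)
    case base
    show ?case
    proof (rule C.subspaceI)
      show "0 \<in> Collect (\<lambda>w. fst w \<in> span (unimod_eigvecs_R T) \<and> snd w \<in> span (unimod_eigvecs_R T))"
        by (simp add: span_zero)
    next
      fix a b assume "a \<in> Collect (\<lambda>w. fst w \<in> span (unimod_eigvecs_R T) \<and> snd w \<in> span (unimod_eigvecs_R T))"
        "b \<in> Collect (\<lambda>w. fst w \<in> span (unimod_eigvecs_R T) \<and> snd w \<in> span (unimod_eigvecs_R T))"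
      then show "a + b \<in> Collect (\<lambda>w. fst w \<in> span (unimod_eigvecs_R T) \<and> snd w \<in> span (unimod_eigvecs_R T))"
        by (simp add: span_add)
    next
      fix c a assume "a \<in> Collect (\<lambda>w. fst w \<in> span (unimod_eigvecs_R T) \<and> snd w \<in> span (unimod_eigvecs_R T))"
      then show "cplx_scaleale c a \<in> Collect (\<lambda>w. fst w \<in> span (unimod_eigvecs_R T) \<and> snd w \<in> span (unimod_eigvecs_R T))"
        by (simp add: cplx_scaleale_def span_add span_diff span_scale)
    qed
  next
    case (step e)
    obtain a b where e: "e = (a, b)" by (cases e)
    from step obtain l where el: "e \<noteq> 0" "cmod l = 1" "cplx_op T e = cplx_scaleale l e"
      unfolding unimod_eigvecs_C_def by blast
    have "a \<in> unimod_eigvecs_R T" unfolding unimod_eigvecs_R_def using step e by blast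
    moreover have "b \<in> unimod_eigvecs_R T"
    proof -
      define e' where "e' = cplx_scaleale (- \<i>) e"
      have e'eq: "e' = (b, - a)" by (simp add: e'_def e cplx_scaleale_def)
      have "e' \<noteq> 0" using el(1) e by (auto simp: e'eq zero_prod_def)
      moreover have "cplx_op T e' = cplx_scaleale l e'"
      proof -
        have "cplx_op T e' = cplx_scaleale (- \<i>) (cplx_scaleale l e)"
          unfolding e'_def C.T_sc el(3) ..
        also have "\<dots> = cplx_scaleale (- \<i> * l) e" by (rule C.scale_scale)
        also have "\<dots> = cplx_scaleale (l * - \<i>) e" by (simp only: mult.commute)
        also have "\<dots> = cplx_scaleale l e'" unfolding e'_def by (rule C.scale_scale[symmetric])
        finally show ?thesis .
      qed
      ultimately have "(b, - a) \<in> unimod_eigvecs_C cplx_scaleale (cplx_op T)"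
        using el(2) unfolding unimod_eigvecs_C_def e'eq by blast
      then show ?thesis unfolding unimod_eigvecs_R_def by blast
    qed
    ultimately show ?case using e by (simp add: span_base)
  qed
qed

lemma real_easy:
  assumes "x \<in> span (unimod_eigvecs_R T)"
  shows "fin_dim_span scaleR (range (\<lambda>n. (T^^n) x))"
proof (rule R.span_easy)
  show "x \<in> module.span scaleR (unimod_eigvecs_R T)" using assms by (simp add: span_real_eq)
  fix s assume "s \<in> unimod_eigvecs_R T"
  then obtain y l where "(s, y) \<noteq> 0" "cplx_op T (s, y) = cplx_scaleale l (s, y)"
    unfolding unimod_eigvecs_R_def unimod_eigvecs_C_def by blast
  then have Ts: "T s = Re l *\<^sub>R s - Im l *\<^sub>R y" and Ty: "T y = Re l *\<^sub>R y + Im l *\<^sub>R s"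
    by (simp_all add: cplx_op_def cplx_scaleale_def)
  have sB: "s \<in> span {s, y}" "y \<in> span {s, y}" by (simp_all add: span_base)
  show "\<exists>B. finite B \<and> s \<in> module.span scaleR B \<and> (\<forall>b\<in>B. T b \<in> module.span scaleR B)"
    unfolding span_real_eq[symmetric]
  proof (intro exI[of _ "{s, y}"] conjI ballI)
    show "finite {s, y}" by simp
    show "s \<in> span {s, y}" by (rule sB(1))
    fix b assume "b \<in> {s, y}"
    moreover have "T s \<in> span {s, y}" unfolding Ts by (intro span_diff span_scale sB)
    moreover have "T y \<in> span {s, y}" unfolding Ty by (intro span_add span_scale sB)
    ultimately show "T b \<in> span {s, y}" by blast
  qed
qed

lemma real_hard:
  assumes rec: "recurrent T x" and fd: "fin_dim_span scaleR (range (\<lambda>n. (T^^n) x))"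
  shows "x \<in> span (unimod_eigvecs_R T)"
proof -
  interpret C: ctvs cplx_scaleale "cplx_op T" by (rule cplx_ctvs)
  from fd obtain B where B: "finite B" "span B = span (range (\<lambda>n. (T^^n) x))"
    unfolding fin_dim_span_def span_real_eq by blast
  have "range (\<lambda>n. (cplx_op T ^^ n) (x, 0)) \<subseteq> C.span ((\<lambda>b. (b, 0)) ` B)"
  proof
    fix w assume "w \<in> range (\<lambda>n. (cplx_op T ^^ n) (x, 0))"
    then obtain n where "w = ((T^^n) x, 0)" by (auto simp: cplx_pow R.Tpow_0)
    moreover have "(T^^n) x \<in> span (range (\<lambda>n. (T^^n) x))" by (intro span_base) simp
    then have "(T^^n) x \<in> span B" using B(2) by simp
    ultimately show "w \<in> C.span ((\<lambda>b. (b, 0)) ` B)" using cplx_span_embed[of "(T^^n) x" B] by simp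
  qed
  from C.recurrent_fin_imp_span[OF cplx_recurrent[OF rec] _ this] B(1)
  have "(x, 0) \<in> C.span (unimod_eigvecs_C cplx_scaleale (cplx_op T))"
    using finite_imageI by blast
  from cplx_span_proj[OF this] show ?thesis by simp
qed

end

theorem mainTheorem15:
  shows
  \<comment> \<open>real F-spaces\<close>
  "(F_space (scaleR :: real \<Rightarrow> 'a::{real_vector,metric_space} \<Rightarrow> 'a) \<and>
    separable_space TYPE('a) \<and> infinite_dimensional scaleR (UNIV :: 'a set) \<longrightarrow>
    (\<forall>T :: 'a \<Rightarrow> 'a. linear T \<and> continuous_on UNIV T \<longrightarrow>
       (\<forall>x. recurrent T x \<longrightarrow>
          (x \<in> span (unimod_eigvecs_R T) \<longleftrightarrow> fin_dim_span scaleR (range (\<lambda>n. (T ^^ n) x))))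
     \<and> (\<forall>\<F>. furstenberg_family \<F> \<and> FRec \<F> euclidean T - span (unimod_eigvecs_R T) \<noteq> {} \<longrightarrow>
          (\<exists>Z. subspace Z \<and> T ` Z \<subseteq> Z \<and> infinite_dimensional scaleR Z \<and>
               (\<forall>N\<ge>1. PiE {..<N} (\<lambda>_. Z) \<subseteq> FRec \<F> (power_top N TYPE('a)) (op_power N T))))))
   \<and>
  \<comment> \<open>complex F-spaces\<close>
  (\<forall>sc :: complex \<Rightarrow> 'b::{ab_group_add,metric_space} \<Rightarrow> 'b.
    F_space sc \<and> separable_space TYPE('b) \<and> infinite_dimensional sc (UNIV :: 'b set) \<longrightarrow>
    (\<forall>T :: 'b \<Rightarrow> 'b. Vector_Spaces.linear sc sc T \<and> continuous_on UNIV T \<longrightarrow>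
       (\<forall>x. recurrent T x \<longrightarrow>
          (x \<in> module.span sc (unimod_eigvecs_C sc T) \<longleftrightarrow>
           fin_dim_span sc (range (\<lambda>n. (T ^^ n) x))))
     \<and> (\<forall>\<F>. furstenberg_family \<F> \<and>
             FRec \<F> euclidean T - module.span sc (unimod_eigvecs_C sc T) \<noteq> {} \<longrightarrow>
          (\<exists>Z. module.subspace sc Z \<and> T ` Z \<subseteq> Z \<and> infinite_dimensional sc Z \<and>
               (\<forall>N\<ge>1. PiE {..<N} (\<lambda>_. Z) \<subseteq> FRec \<F> (power_top N TYPE('b)) (op_power N T))))))"
proof -
  have R: "F_space (scaleR :: real \<Rightarrow> 'a::{real_vector,metric_space} \<Rightarrow> 'a) \<and>
    separable_space TYPE('a) \<and> infinite_dimensional scaleR (UNIV :: 'a set) \<longrightarrow>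
    (\<forall>T :: 'a \<Rightarrow> 'a. linear T \<and> continuous_on UNIV T \<longrightarrow>
       (\<forall>x. recurrent T x \<longrightarrow>
          (x \<in> span (unimod_eigvecs_R T) \<longleftrightarrow> fin_dim_span scaleR (range (\<lambda>n. (T ^^ n) x))))
     \<and> (\<forall>\<F>. furstenberg_family \<F> \<and> FRec \<F> euclidean T - span (unimod_eigvecs_R T) \<noteq> {} \<longrightarrow>
          (\<exists>Z. subspace Z \<and> T ` Z \<subseteq> Z \<and> infinite_dimensional scaleR Z \<and>
               (\<forall>N\<ge>1. PiE {..<N} (\<lambda>_. Z) \<subseteq> FRec \<F> (power_top N TYPE('a)) (op_power N T)))))"
  proof (intro impI allI)
    assume H: "F_space (scaleR :: real \<Rightarrow> 'a \<Rightarrow> 'a) \<and>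
      separable_space TYPE('a) \<and> infinite_dimensional scaleR (UNIV :: 'a set)"
    fix T :: "'a \<Rightarrow> 'a" assume HT: "linear T \<and> continuous_on UNIV T"
    have F1: "vector_space (scaleR :: real \<Rightarrow> 'a \<Rightarrow> 'a)"
      and F2: "continuous_on UNIV (\<lambda>p::'a \<times> 'a. fst p + snd p)"
      and F3: "continuous_on UNIV (\<lambda>p::real \<times> 'a. scaleR (fst p) (snd p))"
      using H unfolding F_space_def by blast+
    have L1: "Vector_Spaces.linear scaleR scaleR T" and L2: "continuous_on UNIV T"
      using HT unfolding Real_Vector_Spaces.linear_def by blast+
    have tv: "tvs scaleR T"
      by (intro tvs.intro tvs_axioms.intro F1 F2 F3 L1 L2)
    show "(\<forall>x. recurrent T x \<longrightarrow>
          (x \<in> span (unimod_eigvecs_R T) \<longleftrightarrow> fin_dim_span scaleR (range (\<lambda>n. (T ^^ n) x))))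
     \<and> (\<forall>\<F>. furstenberg_family \<F> \<and> FRec \<F> euclidean T - span (unimod_eigvecs_R T) \<noteq> {} \<longrightarrow>
          (\<exists>Z. subspace Z \<and> T ` Z \<subseteq> Z \<and> infinite_dimensional scaleR Z \<and>
               (\<forall>N\<ge>1. PiE {..<N} (\<lambda>_. Z) \<subseteq> FRec \<F> (power_top N TYPE('a)) (op_power N T))))"
    proof (intro conjI allI impI)
      fix x assume "recurrent T x"
      then show "x \<in> span (unimod_eigvecs_R T) \<longleftrightarrow> fin_dim_span scaleR (range (\<lambda>n. (T ^^ n) x))"
        using real_easy[OF tv] real_hard[OF tv] by blast
    next
      fix \<F> assume HF: "furstenberg_family \<F> \<and> FRec \<F> euclidean T - span (unimod_eigvecs_R T) \<noteq> {}"
      then obtain x where x: "x \<in> FRec \<F> euclidean T" "x \<notin> span (unimod_eigvecs_R T)" by blast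
      have ff: "furstenberg_family \<F>" using HF by blast
      have rec: "recurrent T x" by (rule tvs.FRec_recurrent[OF tv ff x(1)])
      have nfd: "\<not> fin_dim_span scaleR (range (\<lambda>n. (T ^^ n) x))"
        using real_hard[OF tv rec] x(2) by blast
      show "\<exists>Z. subspace Z \<and> T ` Z \<subseteq> Z \<and> infinite_dimensional scaleR Z \<and>
               (\<forall>N\<ge>1. PiE {..<N} (\<lambda>_. Z) \<subseteq> FRec \<F> (power_top N TYPE('a)) (op_power N T))"
        unfolding subspace_real_eq by (rule tvs.part2[OF tv ff x(1) nfd])
    qed
  qed
  have C: "\<forall>sc :: complex \<Rightarrow> 'b::{ab_group_add,metric_space} \<Rightarrow> 'b.
    F_space sc \<and> separable_space TYPE('b) \<and> infinite_dimensional sc (UNIV :: 'b set) \<longrightarrow>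
    (\<forall>T :: 'b \<Rightarrow> 'b. Vector_Spaces.linear sc sc T \<and> continuous_on UNIV T \<longrightarrow>
       (\<forall>x. recurrent T x \<longrightarrow>
          (x \<in> module.span sc (unimod_eigvecs_C sc T) \<longleftrightarrow>
           fin_dim_span sc (range (\<lambda>n. (T ^^ n) x))))
     \<and> (\<forall>\<F>. furstenberg_family \<F> \<and>
             FRec \<F> euclidean T - module.span sc (unimod_eigvecs_C sc T) \<noteq> {} \<longrightarrow>
          (\<exists>Z. module.subspace sc Z \<and> T ` Z \<subseteq> Z \<and> infinite_dimensional sc Z \<and>
               (\<forall>N\<ge>1. PiE {..<N} (\<lambda>_. Z) \<subseteq> FRec \<F> (power_top N TYPE('b)) (op_power N T)))))"
  proof (intro impI allI)
    fix sc :: "complex \<Rightarrow> 'b \<Rightarrow> 'b"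
    assume H: "F_space sc \<and> separable_space TYPE('b) \<and> infinite_dimensional sc (UNIV :: 'b set)"
    fix T :: "'b \<Rightarrow> 'b" assume HT: "Vector_Spaces.linear sc sc T \<and> continuous_on UNIV T"
    have F1: "vector_space sc"
      and F2: "continuous_on UNIV (\<lambda>p::'b \<times> 'b. fst p + snd p)"
      and F3: "continuous_on UNIV (\<lambda>p::complex \<times> 'b. sc (fst p) (snd p))"
      using H unfolding F_space_def by blast+
    have L1: "Vector_Spaces.linear sc sc T" and L2: "continuous_on UNIV T"
      using HT by blast+
    have ct: "ctvs sc T"
      by (intro ctvs.intro tvs.intro tvs_axioms.intro F1 F2 F3 L1 L2)
    then have tv: "tvs sc T" by (rule ctvs.axioms)
    interpret C: ctvs sc T by (rule ct)
    have easy: "fin_dim_span sc (range (\<lambda>n. (T ^^ n) x))" if "x \<in> C.span (unimod_eigvecs_C sc T)" for x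
    proof (rule C.span_easy[OF that])
      fix s assume "s \<in> unimod_eigvecs_C sc T"
      then obtain c where "T s = sc c s" unfolding unimod_eigvecs_C_def by blast
      moreover have "s \<in> C.span {s}" by (simp add: C.span_base)
      ultimately show "\<exists>B. finite B \<and> s \<in> C.span B \<and> (\<forall>b\<in>B. T b \<in> C.span B)"
        by (intro exI[of _ "{s}"]) (simp add: C.span_scale)
    qed
    have hard: "x \<in> C.span (unimod_eigvecs_C sc T)" if "recurrent T x" "fin_dim_span sc (range (\<lambda>n. (T ^^ n) x))" for x
    proof -
      from that(2) obtain B where B: "finite B" "C.span B = C.span (range (\<lambda>n. (T^^n) x))"
        unfolding fin_dim_span_def by blast
      have "range (\<lambda>n. (T^^n) x) \<subseteq> C.span (range (\<lambda>n. (T^^n) x))" by (rule C.span_superset)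
      then have "range (\<lambda>n. (T^^n) x) \<subseteq> C.span B" by (simp only: B(2))
      then show ?thesis by (rule C.recurrent_fin_imp_span[OF that(1) B(1)])
    qed
    show "(\<forall>x. recurrent T x \<longrightarrow>
          (x \<in> module.span sc (unimod_eigvecs_C sc T) \<longleftrightarrow>
           fin_dim_span sc (range (\<lambda>n. (T ^^ n) x))))
     \<and> (\<forall>\<F>. furstenberg_family \<F> \<and>
             FRec \<F> euclidean T - module.span sc (unimod_eigvecs_C sc T) \<noteq> {} \<longrightarrow>
          (\<exists>Z. module.subspace sc Z \<and> T ` Z \<subseteq> Z \<and> infinite_dimensional sc Z \<and>
               (\<forall>N\<ge>1. PiE {..<N} (\<lambda>_. Z) \<subseteq> FRec \<F> (power_top N TYPE('b)) (op_power N T))))"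
    proof (intro conjI allI impI)
      fix x assume "recurrent T x"
      then show "x \<in> module.span sc (unimod_eigvecs_C sc T) \<longleftrightarrow> fin_dim_span sc (range (\<lambda>n. (T ^^ n) x))"
        using easy hard by blast
    next
      fix \<F> assume HF: "furstenberg_family \<F> \<and> FRec \<F> euclidean T - module.span sc (unimod_eigvecs_C sc T) \<noteq> {}"
      then obtain x where x: "x \<in> FRec \<F> euclidean T" "x \<notin> module.span sc (unimod_eigvecs_C sc T)" by blast
      have ff: "furstenberg_family \<F>" using HF by blast
      have rec: "recurrent T x" by (rule C.FRec_recurrent[OF ff x(1)])
      have nfd: "\<not> fin_dim_span sc (range (\<lambda>n. (T ^^ n) x))"
        using hard[OF rec] x(2) by blast
      show "\<exists>Z. module.subspace sc Z \<and> T ` Z \<subseteq> Z \<and> infinite_dimensional sc Z \<and>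
               (\<forall>N\<ge>1. PiE {..<N} (\<lambda>_. Z) \<subseteq> FRec \<F> (power_top N TYPE('b)) (op_power N T))"
        by (rule C.part2[OF ff x(1) nfd])
    qed
  qed
  show ?thesis by (rule conjI[OF R C])
qed


end
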